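(* Let $u:\Sigma\to M$ be a smooth $(j,J)$-holomorphic map and $z_0\in\Sigma$ with $j^ku(z_0)=0$ for some $k\ge 1$. Let $z=s+it$ be a complex coordinate on $\Sigma$ centered at $z_0$ and $(w_1,\dots,w_n)$, $w_m=x_m+\sqrt{-1}y_m$, coordinates on $M$ centered at $p_0=u(z_0)$ with $J\,\partial/\partial x_m|_{p_0}=\partial/\partial y_m|_{p_0}$ and $J\,\partial/\partial y_m|_{p_0}=-\partial/\partial x_m|_{p_0}$ for all $m$. Then $$u(z)=\vec a_{k+1}z^{k+1}+o(|z|^{k+1})$$ for some $\vec a_{k+1}\in T_{p_0}M\cong\mathbb C^n$. Equivalently, $d^{k+1}u(z_0)=\vec a\cdot dz^{\otimes(k+1)}$ with $\vec a\in T_{u(z_0)}M$. In particular the principal jet of $u$ at $z_0$ is holomorphic (lies in $H^{(k+1,0)}_{(z_0,u(z_0))}$), and at every point of $\Sigma$ the ramification degree of $u$ equals its holomorphic ramification degree.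
   Context: $(M,J)$ is an almost complex manifold of real dimension $2n$, $(\Sigma,j)$ a Riemann surface. $u$ is $(j,J)$-holomorphic if $J\circ du=du\circ j$. For a smooth map $u$ and $z\in\Sigma$, $j^ku(z)=0$ means that all derivatives of $u$ of orders $1,\dots,k$ vanish at $z$ (in local coordinates; this condition is coordinate independent). When $j^ku(z)=0$, the $(k+1)$-st derivative $d^{k+1}u(z)$ is a well-defined symmetric $(k+1)$-linear map $T_z\Sigma\to T_{u(z)}M$. The space $\mathrm{Sym}^\ell(T_z\Sigma,T_xM)$ of symmetric $\ell$-linear maps splits, relative to $(j_z,J_x)$, into the holomorphic part $H^{(\ell,0)}_{(z,x)}$ (maps that are complex multilinear, i.e. $L(jv_1,v_2,\dots)=J_xL(v_1,v_2,\dots)$), the antiholomorphic part and mixed parts; $\pi^{hol}$ denotes projection onto $H^{(\ell,0)}$. The ramification degree of $u$ at $z$ is the $k$ with $j^ku(z)=0$, $j^{k+1}u(z)\neq0$ (degree $0$ at immersed points), and $j^{k+1}u(z)$ is then called the principal jet. The holomorphic ramification degree is defined the same way using the holomorphic jets $j^\ell_{hol}u(z)=(\pi^{hol}(d^mu(z)))_{m\le\ell}$ instead of $j^\ell u(z)$. *)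

theory Defs
  imports "HOL-Analysis.Analysis"
begin

fun iter_deriv :: "('a::real_normed_vector \<Rightarrow> 'b::real_normed_vector) \<Rightarrow> 'a list \<Rightarrow> 'a \<Rightarrow> 'b" where
  "iter_deriv f [] = f"
| "iter_deriv f (v # vs) = (\<lambda>x. frechet_derivative (iter_deriv f vs) (at x) v)"

definition smooth_on :: "'a::real_normed_vector set \<Rightarrow> ('a \<Rightarrow> 'b::real_normed_vector) \<Rightarrow> bool" where
  "smooth_on S f \<longleftrightarrow> (\<forall>vs. iter_deriv f vs differentiable_on S)"

definition jet_vanishes :: "nat \<Rightarrow> ('a::real_normed_vector \<Rightarrow> 'b::real_normed_vector) \<Rightarrow> 'a \<Rightarrow> bool" where
  "jet_vanishes k f z \<longleftrightarrow> (\<forall>vs. 1 \<le> length vs \<and> length vs \<le> k \<longrightarrow> iter_deriv f vs z = 0)"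

definition almost_complex_on :: "'a::real_normed_vector set \<Rightarrow> ('a \<Rightarrow> 'a \<Rightarrow> 'a) \<Rightarrow> bool" where
  "almost_complex_on V J \<longleftrightarrow>
     (\<forall>p\<in>V. linear (J p) \<and> (\<forall>v. J p (J p v) = - v)) \<and> (\<forall>v. smooth_on V (\<lambda>p. J p v))"

text \<open>u is (j,J)-holomorphic on U (j = multiplication by i on C): J o du = du o j.\<close>
definition J_holomorphic_on :: "complex set \<Rightarrow> ('a::real_normed_vector \<Rightarrow> 'a \<Rightarrow> 'a) \<Rightarrow> (complex \<Rightarrow> 'a) \<Rightarrow> bool" where
  "J_holomorphic_on U J u \<longleftrightarrow>
     (\<forall>z\<in>U. \<forall>v. J (u z) (frechet_derivative u (at z) v) = frechet_derivative u (at z) (\<i> * v))"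

end

theory Submission
  imports Defs
begin

lemma iter_deriv_append: "iter_deriv f (xs @ ys) = iter_deriv (iter_deriv f ys) xs"
  by (induction xs) auto

lemma frechet_derivative_cong_open:
  assumes "open U" "x \<in> U" "\<And>y. y \<in> U \<Longrightarrow> f y = g y"
  shows "frechet_derivative f (at x) = frechet_derivative g (at x)"
proof -
  have "\<And>f'. (f has_derivative f') (at x) \<longleftrightarrow> (g has_derivative f') (at x)"
    using has_derivative_transform_within_open[OF _ assms(1,2)] assms(3) by metis
  then show ?thesis unfolding frechet_derivative_def by simp
qed

lemma iter_deriv_cong_open:
  assumes "open U" "\<And>y. y \<in> U \<Longrightarrow> f y = g y" "x \<in> U"
  shows "iter_deriv f vs x = iter_deriv g vs x"
  using assms(3)
proof (induction vs arbitrary: x)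
  case Nil then show ?case using assms by simp
next
  case (Cons v vs)
  then show ?case using frechet_derivative_cong_open[OF assms(1) Cons.prems, of "iter_deriv f vs" "iter_deriv g vs"]
    by simp
qed

lemma differentiable_on_cong_open:
  assumes "open U" "\<And>y. y \<in> U \<Longrightarrow> f y = g y" "g differentiable_on U"
  shows "f differentiable_on U"
  using assms unfolding differentiable_on_eq_differentiable_at[OF assms(1)]
  by (metis differentiable_def has_derivative_transform_within_open)

definition su :: "nat \<Rightarrow> 'a::real_normed_vector set \<Rightarrow> ('a \<Rightarrow> 'b::real_normed_vector) \<Rightarrow> bool" where
  "su n U f \<longleftrightarrow> (\<forall>ws. length ws < n \<longrightarrow> iter_deriv f ws differentiable_on U)"

lemma smooth_on_su: "smooth_on U f \<longleftrightarrow> (\<forall>n. su n U f)"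
  unfolding smooth_on_def su_def by (meson lessI)

lemma su_mono: "su n U f \<Longrightarrow> m \<le> n \<Longrightarrow> su m U f"
  unfolding su_def by auto

lemma su_deriv: "su (Suc n) U f \<Longrightarrow> su n U (iter_deriv f [v])"
  unfolding su_def
proof (intro allI impI)
  fix ws :: "'a list" assume "\<forall>ws. length ws < Suc n \<longrightarrow> iter_deriv f ws differentiable_on U" "length ws < n"
  then have "iter_deriv f (ws @ [v]) differentiable_on U" by simp
  then show "iter_deriv (iter_deriv f [v]) ws differentiable_on U" by (simp only: iter_deriv_append)
qed

lemma smooth_deriv: "smooth_on U f \<Longrightarrow> smooth_on U (iter_deriv f vs)"
  unfolding smooth_on_def by (metis iter_deriv_append)

lemma su_has_derivative:
  assumes "open U" "su n U f" "length ws < n" "x \<in> U"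
  shows "(iter_deriv f ws has_derivative (\<lambda>v. iter_deriv f (v # ws) x)) (at x)"
proof -
  have "iter_deriv f ws differentiable at x"
    using assms unfolding su_def differentiable_on_eq_differentiable_at[OF assms(1)] by blast
  then show ?thesis using frechet_derivative_works by fastforce
qed

lemma iter_deriv_add:
  assumes U: "open U" and f: "su n U f" and g: "su n U g"
  shows "length ws \<le> n \<Longrightarrow> x \<in> U \<Longrightarrow> iter_deriv (\<lambda>z. f z + g z) ws x = iter_deriv f ws x + iter_deriv g ws x"
proof (induction ws arbitrary: x)
  case Nil then show ?case by simp
next
  case (Cons v ws)
  have eq: "\<And>y. y \<in> U \<Longrightarrow> iter_deriv (\<lambda>z. f z + g z) ws y = iter_deriv f ws y + iter_deriv g ws y"
    using Cons by simp
  have "((\<lambda>y. iter_deriv f ws y + iter_deriv g ws y) has_derivative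
     (\<lambda>v. iter_deriv f (v # ws) x + iter_deriv g (v # ws) x)) (at x)"
    using su_has_derivative[OF U f, of ws x] su_has_derivative[OF U g, of ws x] Cons.prems
    by (intro has_derivative_add) auto
  then have "frechet_derivative (\<lambda>y. iter_deriv f ws y + iter_deriv g ws y) (at x) =
      (\<lambda>v. iter_deriv f (v # ws) x + iter_deriv g (v # ws) x)"
    by (metis frechet_derivative_at)
  then show ?case using frechet_derivative_cong_open[OF U Cons.prems(2) eq] by simp
qed

lemma su_add:
  assumes U: "open U" and f: "su n U f" and g: "su n U g"
  shows "su n U (\<lambda>z. f z + g z)"
  unfolding su_def
proof (intro allI impI)
  fix ws :: "'a list" assume l: "length ws < n"
  have "(\<lambda>y. iter_deriv f ws y + iter_deriv g ws y) differentiable_on U"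
    using f g l unfolding su_def by (intro differentiable_on_add) auto
  then show "iter_deriv (\<lambda>z. f z + g z) ws differentiable_on U"
    using differentiable_on_cong_open[OF U, of "iter_deriv (\<lambda>z. f z + g z) ws"] iter_deriv_add[OF U f g, of ws] l
    by simp
qed

lemma iter_deriv_linear:
  assumes U: "open U" and f: "su n U f" and L: "bounded_linear L"
  shows "length ws \<le> n \<Longrightarrow> x \<in> U \<Longrightarrow> iter_deriv (\<lambda>z. L (f z)) ws x = L (iter_deriv f ws x)"
proof (induction ws arbitrary: x)
  case Nil then show ?case by simp
next
  case (Cons v ws)
  have eq: "\<And>y. y \<in> U \<Longrightarrow> iter_deriv (\<lambda>z. L (f z)) ws y = L (iter_deriv f ws y)"
    using Cons by simp
  have "((\<lambda>y. L (iter_deriv f ws y)) has_derivative (\<lambda>v. L (iter_deriv f (v # ws) x))) (at x)"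
    using su_has_derivative[OF U f, of ws x] Cons.prems
    by (intro bounded_linear.has_derivative[OF L]) auto
  then have "frechet_derivative (\<lambda>y. L (iter_deriv f ws y)) (at x) = (\<lambda>v. L (iter_deriv f (v # ws) x))"
    by (metis frechet_derivative_at)
  then show ?case using frechet_derivative_cong_open[OF U Cons.prems(2) eq] by simp
qed

lemma su_linear:
  assumes U: "open U" and f: "su n U f" and L: "bounded_linear L"
  shows "su n U (\<lambda>z. L (f z))"
  unfolding su_def
proof (intro allI impI)
  fix ws :: "'a list" assume l: "length ws < n"
  have "(\<lambda>y. L (iter_deriv f ws y)) differentiable_on U"
    using f l unfolding su_def differentiable_on_def differentiable_def
    by (metis bounded_linear.has_derivative[OF L])
  then show "iter_deriv (\<lambda>z. L (f z)) ws differentiable_on U"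
    using differentiable_on_cong_open[OF U, of "iter_deriv (\<lambda>z. L (f z)) ws"] iter_deriv_linear[OF U f L, of ws] l
    by simp
qed

lemma iter_deriv_const: "iter_deriv (\<lambda>z. c) ws = (\<lambda>z. if ws = [] then c else 0)"
  by (induction ws) auto

lemma su_const: "su n U (\<lambda>z. c)"
  unfolding su_def iter_deriv_const by auto

lemma su_sum:
  assumes U: "open U" and "finite S" and "\<And>b. b \<in> S \<Longrightarrow> su n U (f b)"
  shows "su n U (\<lambda>z. \<Sum>b\<in>S. f b z)"
  using assms(2,3)
  by (induction S rule: finite_induct) (auto simp: su_const intro!: su_add[OF U])

lemma iter_deriv_sum:
  assumes U: "open U" and "finite S" and "\<And>b. b \<in> S \<Longrightarrow> su n U (f b)"
    and "length ws \<le> n" "x \<in> U"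
  shows "iter_deriv (\<lambda>z. \<Sum>b\<in>S. f b z) ws x = (\<Sum>b\<in>S. iter_deriv (f b) ws x)"
  using assms(2,3,5)
proof (induction S arbitrary: x rule: finite_induct)
  case empty then show ?case by (simp add: iter_deriv_const)
next
  case (insert b S)
  have "iter_deriv (\<lambda>z. \<Sum>b\<in>insert b S. f b z) ws x = iter_deriv (\<lambda>z. f b z + (\<Sum>b\<in>S. f b z)) ws x"
    using insert by simp
  also have "\<dots> = iter_deriv (f b) ws x + iter_deriv (\<lambda>z. \<Sum>b\<in>S. f b z) ws x"
    using insert assms(4) by (intro iter_deriv_add[OF U] su_sum[OF U]) auto
  finally show ?case using insert by simp
qed

lemma su_diff_on: "su (Suc n) U f \<Longrightarrow> f differentiable_on U"
proof -
  assume "su (Suc n) U f"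
  then have "iter_deriv f [] differentiable_on U" unfolding su_def by (metis list.size(3) zero_less_Suc)
  then show ?thesis by simp
qed

lemma su_diff_at: "open U \<Longrightarrow> su (Suc n) U f \<Longrightarrow> x \<in> U \<Longrightarrow> f differentiable at x"
  using su_diff_on differentiable_on_eq_differentiable_at by blast

lemma iter_deriv_one_scaleR:
  assumes U: "open U" and f: "su (Suc n) U f" and g: "su (Suc m) U g" and x: "x \<in> U"
  shows "iter_deriv (\<lambda>z. f z *\<^sub>R g z) [v] x = iter_deriv f [v] x *\<^sub>R g x + f x *\<^sub>R iter_deriv g [v] x"
proof -
  have "((\<lambda>z. f z *\<^sub>R g z) has_derivative
      (\<lambda>v. f x *\<^sub>R iter_deriv g [v] x + iter_deriv f [v] x *\<^sub>R g x)) (at x)"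
    using su_has_derivative[OF U f, of "[]" x] su_has_derivative[OF U g, of "[]" x] x
    by (intro has_derivative_scaleR) auto
  then have "frechet_derivative (\<lambda>z. f z *\<^sub>R g z) (at x) =
      (\<lambda>v. f x *\<^sub>R iter_deriv g [v] x + iter_deriv f [v] x *\<^sub>R g x)"
    by (metis frechet_derivative_at)
  then show ?thesis by (simp add: add.commute)
qed

lemma su_scaleR:
  assumes U: "open U"
  shows "su n U f \<Longrightarrow> su n U g \<Longrightarrow> su n U (\<lambda>z. f z *\<^sub>R g z)"
proof (induction n arbitrary: f g)
  case 0 then show ?case by (simp add: su_def)
next
  case (Suc n)
  show ?case unfolding su_def
  proof (intro allI impI)
    fix ws :: "'a list" assume l: "length ws < Suc n"
    show "iter_deriv (\<lambda>z. f z *\<^sub>R g z) ws differentiable_on U"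
    proof (cases ws rule: rev_exhaust)
      case Nil
      have "f differentiable_on U" "g differentiable_on U"
        using Suc.prems su_diff_on by blast+
      then show ?thesis using Nil by (simp add: differentiable_on_scaleR)
    next
      case (snoc ws' v)
      define A where "A = (\<lambda>z. iter_deriv f [v] z *\<^sub>R g z)"
      define B where "B = (\<lambda>z. f z *\<^sub>R iter_deriv g [v] z)"
      have fn: "su n U f" and gn: "su n U g" using Suc.prems su_mono le_Suc_eq by blast+
      have sA: "su n U A" unfolding A_def
        by (rule Suc.IH[OF su_deriv[OF Suc.prems(1)] gn])
      have sB: "su n U B" unfolding B_def
        by (rule Suc.IH[OF fn su_deriv[OF Suc.prems(2)]])
      have l': "length ws' < n" using l snoc by simp
      have eq1: "\<And>y. y \<in> U \<Longrightarrow> iter_deriv (\<lambda>z. f z *\<^sub>R g z) [v] y = A y + B y"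
        unfolding A_def B_def using iter_deriv_one_scaleR[OF U Suc.prems] by simp
      have "\<And>y. y \<in> U \<Longrightarrow> iter_deriv (\<lambda>z. f z *\<^sub>R g z) ws y = iter_deriv (\<lambda>z. A z + B z) ws' y"
        using iter_deriv_cong_open[OF U eq1] snoc by (simp add: iter_deriv_append)
      moreover have "iter_deriv (\<lambda>z. A z + B z) ws' differentiable_on U"
        using su_add[OF U sA sB] l' unfolding su_def by blast
      ultimately show ?thesis using differentiable_on_cong_open[OF U] by blast
    qed
  qed
qed

lemma smooth_scaleR: "open U \<Longrightarrow> smooth_on U f \<Longrightarrow> smooth_on U g \<Longrightarrow> smooth_on U (\<lambda>z. f z *\<^sub>R g z)"
  unfolding smooth_on_su using su_scaleR[of U] by blast

definition flat :: "nat \<Rightarrow> ('a::real_normed_vector \<Rightarrow> 'b::real_normed_vector) \<Rightarrow> 'a \<Rightarrow> bool" where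
  "flat m f x \<longleftrightarrow> (\<forall>ws. length ws < m \<longrightarrow> iter_deriv f ws x = 0)"

lemma flat_deriv: "flat m f x \<Longrightarrow> flat (m - 1) (iter_deriv f [v]) x"
  unfolding flat_def
proof (intro allI impI)
  fix ws :: "'a list" assume "\<forall>ws. length ws < m \<longrightarrow> iter_deriv f ws x = 0" "length ws < m - 1"
  then have "iter_deriv f (ws @ [v]) x = 0" by simp
  then show "iter_deriv (iter_deriv f [v]) ws x = 0" by (simp only: iter_deriv_append)
qed

lemma leibniz_flat:
  assumes U: "open U" and x0: "x0 \<in> U"
  shows "\<forall>(f::'a::real_normed_vector \<Rightarrow> real) (g::'a \<Rightarrow> 'b::real_normed_vector) a b. smooth_on U f \<and> smooth_on U g \<and> flat a f x0 \<and> flat b g x0 \<and> length ws < a + b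
      \<longrightarrow> iter_deriv (\<lambda>z. f z *\<^sub>R g z) ws x0 = 0"
proof (induction ws rule: rev_induct)
  case Nil
  show ?case
  proof (intro allI impI)
    fix f :: "'a \<Rightarrow> real" and g :: "'a \<Rightarrow> 'b" and a b :: nat assume h: "smooth_on U f \<and> smooth_on U g \<and> flat a f x0 \<and> flat b g x0 \<and> length ([]::'a list) < a + b"
    then have "0 < a \<or> 0 < b" by simp
    then have "f x0 = 0 \<or> g x0 = 0" using h unfolding flat_def
      by (metis iter_deriv.simps(1) list.size(3))
    then show "iter_deriv (\<lambda>z. f z *\<^sub>R g z) [] x0 = 0" by auto
  qed
next
  case (snoc v ws)
  show ?case
  proof (intro allI impI)
    fix f :: "'a \<Rightarrow> real" and g :: "'a \<Rightarrow> 'b" and a b :: nat assume h: "smooth_on U f \<and> smooth_on U g \<and> flat a f x0 \<and> flat b g x0 \<and> length (ws @ [v]) < a + b"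
    define A where "A = (\<lambda>z. iter_deriv f [v] z *\<^sub>R g z)"
    define B where "B = (\<lambda>z. f z *\<^sub>R iter_deriv g [v] z)"
    have sf: "smooth_on U f" and sg: "smooth_on U g" using h by auto
    have sA: "smooth_on U A" unfolding A_def using smooth_scaleR[OF U smooth_deriv[OF sf] sg] .
    have sB: "smooth_on U B" unfolding B_def using smooth_scaleR[OF U sf smooth_deriv[OF sg]] .
    have eq1: "\<And>y. y \<in> U \<Longrightarrow> iter_deriv (\<lambda>z. f z *\<^sub>R g z) [v] y = A y + B y"
      unfolding A_def B_def using iter_deriv_one_scaleR[OF U, of 0 f 0 g] sf sg by (simp add: smooth_on_su)
    have "iter_deriv (\<lambda>z. f z *\<^sub>R g z) (ws @ [v]) x0 = iter_deriv (\<lambda>z. A z + B z) ws x0"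
      using iter_deriv_cong_open[OF U eq1 x0] by (simp add: iter_deriv_append)
    also have "\<dots> = iter_deriv A ws x0 + iter_deriv B ws x0"
      using sA sB smooth_on_su iter_deriv_add[OF U, of "length ws" A B ws x0] x0 by auto
    also have "iter_deriv A ws x0 = 0" unfolding A_def
    proof (rule snoc.IH[rule_format], intro conjI)
      show "smooth_on U (iter_deriv f [v])" using smooth_deriv[OF sf] .
      show "flat (a - 1) (iter_deriv f [v]) x0" using flat_deriv h by blast
      show "length ws < a - 1 + b" using h by auto
    qed (use h in auto)
    also have "iter_deriv B ws x0 = 0" unfolding B_def
    proof (rule snoc.IH[rule_format], intro conjI)
      show "smooth_on U (iter_deriv g [v])" using smooth_deriv[OF sg] .
      show "flat (b - 1) (iter_deriv g [v]) x0" using flat_deriv h by blast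
      show "length ws < a + (b - 1)" using h by auto
    qed (use h in auto)
    finally show "iter_deriv (\<lambda>z. f z *\<^sub>R g z) (ws @ [v]) x0 = 0" by simp
  qed
qed

lemma linear_expand:
  fixes f :: "'c::euclidean_space \<Rightarrow> 'b::real_vector"
  assumes "linear f"
  shows "f x = (\<Sum>i\<in>Basis. (x \<bullet> i) *\<^sub>R f i)"
proof -
  interpret linear f by fact
  have "f x = f (\<Sum>i\<in>Basis. (x \<bullet> i) *\<^sub>R i)" by (simp add: euclidean_representation)
  also have "\<dots> = (\<Sum>i\<in>Basis. (x \<bullet> i) *\<^sub>R f i)" by (simp add: sum scale)
  finally show ?thesis .
qed

lemma chain_one:
  fixes u :: "'a::real_normed_vector \<Rightarrow> 'c::euclidean_space" and F :: "'c \<Rightarrow> 'b::real_normed_vector"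
  assumes U: "open U" and V: "open V" and uUV: "u ` U \<subseteq> V"
    and su: "su (Suc n) U u" and sF: "su (Suc m) V F" and x: "x \<in> U"
  shows "iter_deriv (\<lambda>z. F (u z)) [v] x = (\<Sum>b\<in>Basis. (iter_deriv u [v] x \<bullet> b) *\<^sub>R iter_deriv F [b] (u x))"
proof -
  have ux: "u x \<in> V" using uUV x by auto
  have d1: "(u has_derivative (\<lambda>v. iter_deriv u [v] x)) (at x)"
    using su_has_derivative[OF U su, of "[]" x] x by simp
  have d2: "(F has_derivative (\<lambda>v. iter_deriv F [v] (u x))) (at (u x))"
    using su_has_derivative[OF V sF, of "[]" "u x"] ux by simp
  have "((\<lambda>z. F (u z)) has_derivative (\<lambda>v. iter_deriv F [iter_deriv u [v] x] (u x))) (at x)"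
    using diff_chain_at[OF d1 d2] unfolding comp_def .
  from frechet_derivative_at[OF this]
  have "iter_deriv (\<lambda>z. F (u z)) [v] x = iter_deriv F [iter_deriv u [v] x] (u x)"
    by (simp only: iter_deriv.simps) (drule fun_cong[of _ _ v], simp)
  also have "\<dots> = (\<Sum>b\<in>Basis. (iter_deriv u [v] x \<bullet> b) *\<^sub>R iter_deriv F [b] (u x))"
    by (rule linear_expand[OF has_derivative_linear[OF d2]])
  finally show ?thesis .
qed

lemma su_compose:
  fixes u :: "'a::real_normed_vector \<Rightarrow> 'c::euclidean_space"
  assumes U: "open U" and V: "open V" and uUV: "u ` U \<subseteq> V" and su: "smooth_on U u"
  shows "\<forall>F :: 'c \<Rightarrow> 'b::real_normed_vector. smooth_on V F \<longrightarrow> su n U (\<lambda>z. F (u z))"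
proof (induction n)
  case 0 then show ?case by (simp add: su_def)
next
  case (Suc n)
  show ?case
  proof (intro allI impI)
    fix F :: "'c \<Rightarrow> 'b" assume sF: "smooth_on V F"
    show "su (Suc n) U (\<lambda>z. F (u z))" unfolding su_def
    proof (intro allI impI)
      fix ws :: "'a list" assume l: "length ws < Suc n"
      show "iter_deriv (\<lambda>z. F (u z)) ws differentiable_on U"
      proof (cases ws rule: rev_exhaust)
        case Nil
        have "\<And>x. x \<in> U \<Longrightarrow> (\<lambda>z. F (u z)) differentiable at x"
        proof -
          fix x assume x: "x \<in> U"
          have "u differentiable at x" using su_diff_at[OF U _ x] su smooth_on_su by blast
          moreover have "F differentiable at (u x)" using su_diff_at[OF V _] sF smooth_on_su uUV x by blast
          ultimately show "(\<lambda>z. F (u z)) differentiable at x"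
            using differentiable_chain_at[of u x F] by (simp add: o_def)
        qed
        then show ?thesis using Nil U by (simp add: differentiable_on_eq_differentiable_at)
      next
        case (snoc ws' v)
        define G where "G = (\<lambda>z. \<Sum>b\<in>Basis. (iter_deriv u [v] z \<bullet> b) *\<^sub>R iter_deriv F [b] (u z))"
        have sG: "su n U G" unfolding G_def
        proof (rule su_sum[OF U], simp, rule su_scaleR[OF U])
          fix b :: 'c
          show "su n U (\<lambda>z. iter_deriv u [v] z \<bullet> b)"
            using su_linear[OF U _ bounded_linear_inner_left[of b], of n "iter_deriv u [v]"]
              smooth_deriv[OF su] smooth_on_su by blast
          show "su n U (\<lambda>z. iter_deriv F [b] (u z))"
            using Suc.IH smooth_deriv[OF sF] by blast
        qed
        have eq1: "\<And>y. y \<in> U \<Longrightarrow> iter_deriv (\<lambda>z. F (u z)) [v] y = G y"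
        proof -
          fix y assume y: "y \<in> U"
          have "su (Suc 0) U u" "su (Suc 0) V F" using su sF smooth_on_su by blast+
          from chain_one[OF U V uUV this y] show "iter_deriv (\<lambda>z. F (u z)) [v] y = G y" unfolding G_def .
        qed
        have "\<And>y. y \<in> U \<Longrightarrow> iter_deriv (\<lambda>z. F (u z)) ws y = iter_deriv G ws' y"
          using iter_deriv_cong_open[OF U eq1] snoc by (simp add: iter_deriv_append)
        moreover have "iter_deriv G ws' differentiable_on U"
          using sG l snoc unfolding su_def by simp
        ultimately show ?thesis using differentiable_on_cong_open[OF U] by blast
      qed
    qed
  qed
qed

lemma smooth_compose:
  fixes u :: "'a::real_normed_vector \<Rightarrow> 'c::euclidean_space" and F :: "'c \<Rightarrow> 'b::real_normed_vector"
  assumes "open U" "open V" "u ` U \<subseteq> V" "smooth_on U u" "smooth_on V F"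
  shows "smooth_on U (\<lambda>z. F (u z))"
  unfolding smooth_on_su
proof
  fix n show "su n U (\<lambda>z. F (u z))" using su_compose[OF assms(1-4), of n, rule_format, OF assms(5)] .
qed

lemma line_deriv:
  fixes f :: "'a::real_normed_vector \<Rightarrow> real"
  assumes U: "open U" and sf: "su (Suc n) U f" and y: "p + s *\<^sub>R a \<in> U"
  shows "((\<lambda>s. f (p + s *\<^sub>R a)) has_real_derivative iter_deriv f [a] (p + s *\<^sub>R a)) (at s)"
proof -
  let ?y = "p + s *\<^sub>R a"
  have d: "(f has_derivative (\<lambda>v. iter_deriv f [v] ?y)) (at ?y)"
    using su_has_derivative[OF U sf, of "[]"] y by simp
  have l: "((\<lambda>s. p + s *\<^sub>R a) has_derivative (\<lambda>t. t *\<^sub>R a)) (at s)"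
    by (auto intro!: derivative_eq_intros)
  have "((\<lambda>s. f (p + s *\<^sub>R a)) has_derivative (\<lambda>t. iter_deriv f [t *\<^sub>R a] ?y)) (at s)"
    using diff_chain_at[OF l d] unfolding comp_def .
  moreover have "\<And>t. t * iter_deriv f [a] ?y = iter_deriv f [t *\<^sub>R a] ?y"
    using linear_cmul[OF has_derivative_linear[OF d]] by simp
  ultimately show ?thesis by (rule has_derivative_imp_has_field_derivative)
qed

lemma second_diff:
  fixes g :: "'a::real_normed_vector \<Rightarrow> real"
  assumes U: "open U" and sg: "su 3 U g" and h: "h > 0"
    and inU: "\<And>s t. 0 \<le> s \<Longrightarrow> s \<le> h \<Longrightarrow> 0 \<le> t \<Longrightarrow> t \<le> h \<Longrightarrow> x + s *\<^sub>R a + t *\<^sub>R b \<in> U"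
  shows "\<exists>s t. g (x + h *\<^sub>R a + h *\<^sub>R b) - g (x + h *\<^sub>R a) - g (x + h *\<^sub>R b) + g x
      = h^2 * iter_deriv g [b, a] (x + s *\<^sub>R a + t *\<^sub>R b) \<and> 0 \<le> s \<and> s \<le> h \<and> 0 \<le> t \<and> t \<le> h"
proof -
  have sg1: "su (Suc 0) U g" using sg su_mono by (metis One_nat_def le_Suc_eq numeral_3_eq_3)
  have sga: "su (Suc 0) U (iter_deriv g [a])" using su_deriv[of 2 U g a] sg su_mono
    by (metis One_nat_def Suc_1 le_Suc_eq numeral_3_eq_3)
  define \<psi> where "\<psi> = (\<lambda>s. g ((x + h *\<^sub>R b) + s *\<^sub>R a) - g (x + s *\<^sub>R a))"
  have "\<And>s. 0 \<le> s \<Longrightarrow> s \<le> h \<Longrightarrow> DERIV \<psi> s :> iter_deriv g [a] ((x + h *\<^sub>R b) + s *\<^sub>R a) - iter_deriv g [a] (x + s *\<^sub>R a)"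
  proof -
    fix s assume s: "0 \<le> s" "s \<le> h"
    have m1: "(x + h *\<^sub>R b) + s *\<^sub>R a \<in> U" using inU[of s h] s h by (simp add: algebra_simps)
    have m2: "x + s *\<^sub>R a \<in> U" using inU[of s 0] s h by simp
    show "DERIV \<psi> s :> iter_deriv g [a] ((x + h *\<^sub>R b) + s *\<^sub>R a) - iter_deriv g [a] (x + s *\<^sub>R a)"
      unfolding \<psi>_def by (intro DERIV_diff line_deriv[OF U sg1 m1] line_deriv[OF U sg1 m2])
  qed
  from MVT2[OF h this] obtain s where s: "0 < s" "s < h"
    and e1: "\<psi> h - \<psi> 0 = (h - 0) * (iter_deriv g [a] ((x + h *\<^sub>R b) + s *\<^sub>R a) - iter_deriv g [a] (x + s *\<^sub>R a))"
    by auto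
  define chi where "chi = (\<lambda>t. iter_deriv g [a] ((x + s *\<^sub>R a) + t *\<^sub>R b))"
  have "\<And>t. 0 \<le> t \<Longrightarrow> t \<le> h \<Longrightarrow> DERIV chi t :> iter_deriv g [b, a] ((x + s *\<^sub>R a) + t *\<^sub>R b)"
  proof -
    fix t assume t: "0 \<le> t" "t \<le> h"
    have m: "(x + s *\<^sub>R a) + t *\<^sub>R b \<in> U" using inU[of s t] s t by simp
    show "DERIV chi t :> iter_deriv g [b, a] ((x + s *\<^sub>R a) + t *\<^sub>R b)"
      unfolding chi_def using line_deriv[OF U sga m] by simp
  qed
  from MVT2[OF h this] obtain t where t: "0 < t" "t < h"
    and e2: "chi h - chi 0 = (h - 0) * iter_deriv g [b, a] ((x + s *\<^sub>R a) + t *\<^sub>R b)"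
    by auto
  have "g (x + h *\<^sub>R a + h *\<^sub>R b) - g (x + h *\<^sub>R a) - g (x + h *\<^sub>R b) + g x = \<psi> h - \<psi> 0"
    unfolding \<psi>_def by (simp add: algebra_simps)
  also have "\<dots> = h * (chi h - chi 0)" using e1 unfolding chi_def by (simp add: algebra_simps)
  also have "\<dots> = h^2 * iter_deriv g [b, a] (x + s *\<^sub>R a + t *\<^sub>R b)" using e2 by (simp add: power2_eq_square)
  finally have eq: "g (x + h *\<^sub>R a + h *\<^sub>R b) - g (x + h *\<^sub>R a) - g (x + h *\<^sub>R b) + g x
      = h^2 * iter_deriv g [b, a] (x + s *\<^sub>R a + t *\<^sub>R b)" .
  show ?thesis
    by (rule exI[of _ s], rule exI[of _ t], intro conjI eq) (use s t in auto)
qed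

lemma cont_at_iter:
  assumes U: "open U" and s: "su n U g" and l: "length ws < n" and x: "x \<in> U"
  shows "isCont (iter_deriv g ws) x"
  using s l x U unfolding su_def
  by (metis differentiable_imp_continuous_on continuous_on_eq_continuous_at)

lemma clairaut_real:
  fixes g :: "'a::real_normed_vector \<Rightarrow> real"
  assumes U: "open U" and sg: "su 3 U g" and x: "x \<in> U"
  shows "iter_deriv g [b, a] x = iter_deriv g [a, b] x"
proof (rule ccontr)
  let ?F1 = "iter_deriv g [b, a]" and ?F2 = "iter_deriv g [a, b]"
  assume ne: "?F1 x \<noteq> ?F2 x"
  define e where "e = \<bar>?F1 x - ?F2 x\<bar> / 2"
  have e: "e > 0" using ne unfolding e_def by simp
  have "isCont ?F1 x" by (rule cont_at_iter[OF U sg _ x]) simp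
  then obtain d1 where d1: "d1 > 0" "\<And>y. dist y x < d1 \<Longrightarrow> dist (?F1 y) (?F1 x) < e"
    using e unfolding continuous_at_eps_delta by metis
  have "isCont ?F2 x" by (rule cont_at_iter[OF U sg _ x]) simp
  then obtain d2 where d2: "d2 > 0" "\<And>y. dist y x < d2 \<Longrightarrow> dist (?F2 y) (?F2 x) < e"
    using e unfolding continuous_at_eps_delta by metis
  obtain r where r: "r > 0" "ball x r \<subseteq> U" using U x open_contains_ball by blast
  define d where "d = min (min d1 d2) r"
  have d: "d > 0" using d1 d2 r unfolding d_def by simp
  define h where "h = d / (2 * (norm a + norm b + 1))"
  have h: "h > 0" unfolding h_def using d by (simp add: add_nonneg_pos)
  have close: "dist (x + s *\<^sub>R a + t *\<^sub>R b) x < d" if st: "0 \<le> s" "s \<le> h" "0 \<le> t" "t \<le> h" for s t :: real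
  proof -
    have "dist (x + s *\<^sub>R a + t *\<^sub>R b) x = norm (s *\<^sub>R a + t *\<^sub>R b)" by (simp add: dist_norm)
    also have "\<dots> \<le> s * norm a + t * norm b" using st
      by (metis abs_of_nonneg norm_scaleR norm_triangle_ineq)
    also have "\<dots> \<le> h * norm a + h * norm b" using st
      by (intro add_mono mult_right_mono) auto
    also have "\<dots> < h * (norm a + norm b + 1)" using h by (simp add: algebra_simps)
    also have "\<dots> = d / 2"
    proof -
      have pos: "norm a + norm b + 1 > 0" by (simp add: add_nonneg_pos)
      then show ?thesis unfolding h_def by (simp add: field_simps)
    qed
    also have "\<dots> < d" using d by simp
    finally show ?thesis .
  qed
  have inU: "x + s *\<^sub>R a + t *\<^sub>R b \<in> U" if "0 \<le> s" "s \<le> h" "0 \<le> t" "t \<le> h" for s t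
  proof -
    have "dist (x + s *\<^sub>R a + t *\<^sub>R b) x < r" using close[OF that] unfolding d_def by simp
    then show ?thesis using r by (auto simp: dist_commute)
  qed
  have inU': "x + s *\<^sub>R b + t *\<^sub>R a \<in> U" if "0 \<le> s" "s \<le> h" "0 \<le> t" "t \<le> h" for s t
    using inU[of t s] that by (simp add: algebra_simps)
  obtain s1 t1 where P1: "g (x + h *\<^sub>R a + h *\<^sub>R b) - g (x + h *\<^sub>R a) - g (x + h *\<^sub>R b) + g x
      = h^2 * ?F1 (x + s1 *\<^sub>R a + t1 *\<^sub>R b)" and b1: "0 \<le> s1" "s1 \<le> h" "0 \<le> t1" "t1 \<le> h"
    using second_diff[OF U sg h inU] by blast
  obtain s2 t2 where P2: "g (x + h *\<^sub>R b + h *\<^sub>R a) - g (x + h *\<^sub>R b) - g (x + h *\<^sub>R a) + g x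
      = h^2 * ?F2 (x + s2 *\<^sub>R b + t2 *\<^sub>R a)" and b2: "0 \<le> s2" "s2 \<le> h" "0 \<le> t2" "t2 \<le> h"
    using second_diff[OF U sg h inU'] by blast
  have "h^2 * ?F1 (x + s1 *\<^sub>R a + t1 *\<^sub>R b) = h^2 * ?F2 (x + t2 *\<^sub>R a + s2 *\<^sub>R b)"
    using P1 P2 by (simp add: algebra_simps)
  then have eqF: "?F1 (x + s1 *\<^sub>R a + t1 *\<^sub>R b) = ?F2 (x + t2 *\<^sub>R a + s2 *\<^sub>R b)" using h by simp
  have "dist (?F1 (x + s1 *\<^sub>R a + t1 *\<^sub>R b)) (?F1 x) < e"
    using d1(2) close[OF b1] unfolding d_def by simp
  moreover have "dist (?F2 (x + t2 *\<^sub>R a + s2 *\<^sub>R b)) (?F2 x) < e"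
    using d2(2) close[of t2 s2] b2 unfolding d_def by simp
  ultimately have "\<bar>?F1 x - ?F2 x\<bar> < 2 * e" using eqF unfolding dist_real_def by linarith
  then show False unfolding e_def by simp
qed

lemma clairaut:
  fixes G :: "'a::real_normed_vector \<Rightarrow> 'b::euclidean_space"
  assumes U: "open U" and sG: "su 3 U G" and x: "x \<in> U"
  shows "iter_deriv G [b, a] x = iter_deriv G [a, b] x"
proof (rule euclidean_eqI)
  fix e :: 'b assume "e \<in> Basis"
  have L: "bounded_linear (\<lambda>v. v \<bullet> e)" by (rule bounded_linear_inner_left)
  have s: "su 3 U (\<lambda>z. G z \<bullet> e)" by (rule su_linear[OF U sG L])
  have "iter_deriv G [b, a] x \<bullet> e = iter_deriv (\<lambda>z. G z \<bullet> e) [b, a] x"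
    using iter_deriv_linear[OF U sG L, of "[b, a]" x] x by simp
  also have "\<dots> = iter_deriv (\<lambda>z. G z \<bullet> e) [a, b] x" by (rule clairaut_real[OF U s x])
  also have "\<dots> = iter_deriv G [a, b] x \<bullet> e"
    using iter_deriv_linear[OF U sG L, of "[a, b]" x] x by simp
  finally show "iter_deriv G [b, a] x \<bullet> e = iter_deriv G [a, b] x \<bullet> e" .
qed

lemma sym_adj:
  fixes f :: "'a::real_normed_vector \<Rightarrow> 'b::euclidean_space"
  assumes U: "open U" and sf: "smooth_on U f" and x: "x \<in> U"
  shows "iter_deriv f (ws1 @ a # b # ws2) x = iter_deriv f (ws1 @ b # a # ws2) x"
proof -
  have s3: "su 3 U (iter_deriv f ws2)" using smooth_deriv[OF sf] smooth_on_su by blast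
  have eq: "\<And>y. y \<in> U \<Longrightarrow> iter_deriv (iter_deriv f ws2) [a, b] y = iter_deriv (iter_deriv f ws2) [b, a] y"
    using clairaut[OF U s3] by blast
  have "iter_deriv f (ws1 @ a # b # ws2) x = iter_deriv (iter_deriv (iter_deriv f ws2) [a, b]) ws1 x"
    using iter_deriv_append[of f ws1 "[a, b] @ ws2"] iter_deriv_append[of f "[a, b]" ws2] by simp
  also have "\<dots> = iter_deriv (iter_deriv (iter_deriv f ws2) [b, a]) ws1 x"
    by (rule iter_deriv_cong_open[OF U eq x])
  also have "\<dots> = iter_deriv f (ws1 @ b # a # ws2) x"
    using iter_deriv_append[of f ws1 "[b, a] @ ws2"] iter_deriv_append[of f "[b, a]" ws2] by simp
  finally show ?thesis .
qed

lemma move_front: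
  fixes f :: "'a::real_normed_vector \<Rightarrow> 'b::euclidean_space"
  assumes U: "open U" and sf: "smooth_on U f"
  shows "x \<in> U \<Longrightarrow> iter_deriv f (ys1 @ a # zs) x = iter_deriv f (a # ys1 @ zs) x"
proof (induction ys1 arbitrary: x)
  case Nil then show ?case by simp
next
  case (Cons c ys1)
  have "iter_deriv f ((c # ys1) @ a # zs) x = frechet_derivative (iter_deriv f (ys1 @ a # zs)) (at x) c" by simp
  also have "\<dots> = frechet_derivative (iter_deriv f (a # ys1 @ zs)) (at x) c"
    using frechet_derivative_cong_open[OF U Cons.prems Cons.IH] by simp
  also have "\<dots> = iter_deriv f ([] @ c # a # ys1 @ zs) x" by simp
  also have "\<dots> = iter_deriv f ([] @ a # c # ys1 @ zs) x" by (rule sym_adj[OF U sf Cons.prems])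
  finally show ?case by simp
qed

lemma perm_inv:
  fixes f :: "'a::real_normed_vector \<Rightarrow> 'b::euclidean_space"
  assumes U: "open U" and sf: "smooth_on U f"
  shows "mset xs = mset ys \<Longrightarrow> x \<in> U \<Longrightarrow> iter_deriv f xs x = iter_deriv f ys x"
proof (induction xs arbitrary: ys x)
  case Nil then show ?case by simp
next
  case (Cons a xs)
  have "a \<in> set ys" using Cons.prems(1) by (metis list.set_intros(1) set_mset_mset)
  then obtain ys1 ys2 where ys: "ys = ys1 @ a # ys2" by (meson split_list)
  have ms: "mset xs = mset (ys1 @ ys2)" using Cons.prems(1) ys by simp
  have "iter_deriv f (a # xs) x = frechet_derivative (iter_deriv f xs) (at x) a" by simp
  also have "\<dots> = frechet_derivative (iter_deriv f (ys1 @ ys2)) (at x) a"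
    using frechet_derivative_cong_open[OF U Cons.prems(2), of "iter_deriv f xs" "iter_deriv f (ys1 @ ys2)"]
      Cons.IH[OF ms] by simp
  also have "\<dots> = iter_deriv f (a # ys1 @ ys2) x" by simp
  also have "\<dots> = iter_deriv f ys x" using move_front[OF U sf Cons.prems(2)] ys by simp
  finally show ?case .
qed

lemma last_slot:
  fixes f :: "'a::real_normed_vector \<Rightarrow> 'b::real_normed_vector"
  assumes U: "open U" and sf: "smooth_on U f" and x: "x \<in> U"
  shows "iter_deriv f (ws @ [c *\<^sub>R v + d *\<^sub>R w]) x = c *\<^sub>R iter_deriv f (ws @ [v]) x + d *\<^sub>R iter_deriv f (ws @ [w]) x"
proof -
  let ?A = "iter_deriv f [v]" and ?B = "iter_deriv f [w]"
  have eq: "\<And>y. y \<in> U \<Longrightarrow> iter_deriv f [c *\<^sub>R v + d *\<^sub>R w] y = c *\<^sub>R ?A y + d *\<^sub>R ?B y"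
  proof -
    fix y assume y: "y \<in> U"
    have "f differentiable at y" using su_diff_at[OF U _ y] sf smooth_on_su by blast
    then have "linear (frechet_derivative f (at y))" by (rule linear_frechet_derivative)
    then show "iter_deriv f [c *\<^sub>R v + d *\<^sub>R w] y = c *\<^sub>R ?A y + d *\<^sub>R ?B y"
      by (simp add: linear_add linear_cmul)
  qed
  have sA: "smooth_on U ?A" "smooth_on U ?B" using smooth_deriv[OF sf, of "[v]"] smooth_deriv[OF sf, of "[w]"] by auto
  have L1: "bounded_linear (\<lambda>v::'b. c *\<^sub>R v)" "bounded_linear (\<lambda>v::'b. d *\<^sub>R v)"
    by (auto intro: bounded_linear_scaleR_right)
  have s1: "su (length ws) U (\<lambda>y. c *\<^sub>R ?A y)" "su (length ws) U (\<lambda>y. d *\<^sub>R ?B y)"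
    using su_linear[OF U _ L1(1)] su_linear[OF U _ L1(2)] sA smooth_on_su by blast+
  have "iter_deriv f (ws @ [c *\<^sub>R v + d *\<^sub>R w]) x = iter_deriv (iter_deriv f [c *\<^sub>R v + d *\<^sub>R w]) ws x"
    by (simp only: iter_deriv_append)
  also have "\<dots> = iter_deriv (\<lambda>y. c *\<^sub>R ?A y + d *\<^sub>R ?B y) ws x"
    by (rule iter_deriv_cong_open[OF U eq x])
  also have "\<dots> = iter_deriv (\<lambda>y. c *\<^sub>R ?A y) ws x + iter_deriv (\<lambda>y. d *\<^sub>R ?B y) ws x"
    by (rule iter_deriv_add[OF U s1 _ x]) simp
  also have "\<dots> = c *\<^sub>R iter_deriv ?A ws x + d *\<^sub>R iter_deriv ?B ws x"
  proof -
    have s2: "su (length ws) U ?A" "su (length ws) U ?B" using sA smooth_on_su by blast+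
    show ?thesis using iter_deriv_linear[OF U s2(1) L1(1) _ x] iter_deriv_linear[OF U s2(2) L1(2) _ x] by simp
  qed
  also have "\<dots> = c *\<^sub>R iter_deriv f (ws @ [v]) x + d *\<^sub>R iter_deriv f (ws @ [w]) x"
    by (simp only: iter_deriv_append)
  finally show ?thesis .
qed

lemma last_slot_complex:
  fixes f :: "complex \<Rightarrow> 'b::real_normed_vector"
  assumes U: "open U" and sf: "smooth_on U f" and x: "x \<in> U"
  shows "iter_deriv f (ws @ [v]) x = Re v *\<^sub>R iter_deriv f (ws @ [1]) x + Im v *\<^sub>R iter_deriv f (ws @ [\<i>]) x"
proof -
  have "v = Re v *\<^sub>R 1 + Im v *\<^sub>R \<i>" by (simp add: complex_eq_iff)
  then show ?thesis using last_slot[OF U sf x, of ws "Re v" 1 "Im v" \<i>] by simp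
qed

lemma linear_smult_const: "linear (\<lambda>w::complex. w *s (a :: complex ^ 'n))"
proof (rule linearI)
  fix x y :: complex show "(x + y) *s a = x *s a + y *s a" by (simp add: vec_eq_iff algebra_simps)
next
  fix r :: real and x :: complex
  show "(r *\<^sub>R x) *s a = r *\<^sub>R (x *s a)"
    by (simp add: vec_eq_iff)
qed

lemma bl_smult_const: "bounded_linear (\<lambda>w::complex. w *s (a :: complex ^ 'n))"
  using linear_smult_const linear_conv_bounded_linear by blast

lemma poly_has_derivative:
  "((\<lambda>z::complex. (c * z ^ m) *s (a :: complex ^ 'n)) has_derivative
     (\<lambda>v. ((c * of_nat m * v) * z ^ (m - 1)) *s a)) (at z)"
proof -
  have "((\<lambda>z. c * z ^ m) has_derivative (*) (c * (of_nat m * z ^ (m - 1)))) (at z)"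
    using has_field_derivative_imp_has_derivative[OF DERIV_cmult[OF DERIV_power[OF DERIV_ident, of m z UNIV], of c]]
    by simp
  from bounded_linear.has_derivative[OF bl_smult_const this, of a] show ?thesis
    by (simp add: algebra_simps)
qed

lemma poly_iter_deriv:
  "iter_deriv (\<lambda>z::complex. (c * z ^ m) *s (a :: complex ^ 'n)) ws z =
     (c * (\<Prod>j<length ws. of_nat (m - j)) * prod_list ws * z ^ (m - length ws)) *s a"
proof (induction ws arbitrary: c m z rule: rev_induct)
  case Nil then show ?case by simp
next
  case (snoc v ws)
  have d: "iter_deriv (\<lambda>z::complex. (c * z ^ m) *s a) [v] = (\<lambda>z. ((c * of_nat m * v) * z ^ (m - 1)) *s a)"
  proof (rule ext)
    fix z :: complex
    show "iter_deriv (\<lambda>z::complex. (c * z ^ m) *s a) [v] z = ((c * of_nat m * v) * z ^ (m - 1)) *s a"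
      using fun_cong[OF frechet_derivative_at[OF poly_has_derivative[of c m a z]], of v] by simp
  qed
  have "iter_deriv (\<lambda>z::complex. (c * z ^ m) *s a) (ws @ [v]) z =
      iter_deriv (\<lambda>z. ((c * of_nat m * v) * z ^ (m - 1)) *s a) ws z"
    by (simp only: iter_deriv_append d)
  also have "\<dots> = ((c * of_nat m * v) * (\<Prod>j<length ws. of_nat (m - 1 - j)) * prod_list ws * z ^ (m - 1 - length ws)) *s a"
    by (rule snoc.IH)
  also have "\<dots> = (c * (\<Prod>j<length (ws @ [v]). of_nat (m - j)) * prod_list (ws @ [v]) * z ^ (m - length (ws @ [v]))) *s a"
  proof -
    let ?f = "\<lambda>j. (of_nat (m - j) :: complex)"
    have e: "(\<Prod>j<length ws. ?f j) * ?f (length ws) = of_nat m * (\<Prod>j<length ws. ?f (Suc j))"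
      using prod.lessThan_Suc[of ?f "length ws"] prod.lessThan_Suc_shift[of ?f "length ws"] by simp
    have e2: "\<And>j. m - 1 - j = m - Suc j" by simp
    show ?thesis unfolding e2 using e by (simp add: algebra_simps)
  qed
  finally show ?case .
qed

lemma smooth_poly: "smooth_on U (\<lambda>z::complex. (c * z ^ m) *s (a :: complex ^ 'n))"
  unfolding smooth_on_def
proof
  fix vs :: "complex list"
  have "(\<lambda>z. (c * (\<Prod>j<length vs. of_nat (m - j)) * prod_list vs * z ^ (m - length vs)) *s a) differentiable_on U"
    using poly_has_derivative[of "c * (\<Prod>j<length vs. of_nat (m - j)) * prod_list vs" "m - length vs" a]
    unfolding differentiable_on_def differentiable_def
    using has_derivative_at_withinI by blast
  moreover have "iter_deriv (\<lambda>z. (c * z ^ m) *s a) vs =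
      (\<lambda>z. (c * (\<Prod>j<length vs. of_nat (m - j)) * prod_list vs * z ^ (m - length vs)) *s a)"
    by (rule ext) (rule poly_iter_deriv)
  ultimately show "iter_deriv (\<lambda>z. (c * z ^ m) *s a) vs differentiable_on U" by simp
qed

lemma J0_mult:
  fixes L :: "complex ^ 'n \<Rightarrow> complex ^ 'n"
  assumes lin: "linear L" and ax: "\<forall>m. L (axis m 1) = axis m \<i> \<and> L (axis m \<i>) = - axis m 1"
  shows "L x = \<i> *s x"
proof -
  have bas: "\<And>b. b \<in> Basis \<Longrightarrow> L b = \<i> *s b"
  proof -
    fix b :: "complex ^ 'n" assume "b \<in> Basis"
    then obtain m u where b: "b = axis m u" "u \<in> (Basis :: complex set)" unfolding Basis_vec_def by auto
    then have "u = 1 \<or> u = \<i>" by (simp add: Basis_complex_def)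
    moreover have "\<i> *s axis m (1::complex) = axis m \<i>" "\<i> *s axis m \<i> = - axis m (1::complex)"
      by (simp_all add: vec_eq_iff axis_def)
    ultimately show "L b = \<i> *s b" using ax b by auto
  qed
  have lin2: "linear (\<lambda>x::complex ^ 'n. \<i> *s x)"
  proof (rule linearI)
    fix x y :: "complex ^ 'n" show "\<i> *s (x + y) = \<i> *s x + \<i> *s y" by (simp add: vec_eq_iff algebra_simps)
  next
    fix r :: real and x :: "complex ^ 'n"
    show "\<i> *s (r *\<^sub>R x) = r *\<^sub>R (\<i> *s x)" by (simp add: vec_eq_iff)
  qed
  have "L x = (\<Sum>b\<in>Basis. (x \<bullet> b) *\<^sub>R L b)" by (rule linear_expand[OF lin])
  also have "\<dots> = (\<Sum>b\<in>Basis. (x \<bullet> b) *\<^sub>R (\<i> *s b))" by (rule sum.cong) (auto simp: bas)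
  also have "\<dots> = \<i> *s x" by (rule linear_expand[OF lin2, symmetric])
  finally show ?thesis .
qed

lemma flat_little_o:
  fixes g :: "complex \<Rightarrow> 'b::real_normed_vector"
  assumes U: "open U" and z0: "0 \<in> U"
  shows "smooth_on U g \<Longrightarrow> flat (Suc m) g 0 \<Longrightarrow> ((\<lambda>z. norm (g z) / norm z ^ m) \<longlongrightarrow> 0) (at 0)"
proof (induction m arbitrary: g)
  case 0
  have g0: "g 0 = 0" using 0(2) unfolding flat_def by (metis iter_deriv.simps(1) list.size(3) zero_less_Suc)
  have "g differentiable at 0" using su_diff_at[OF U _ z0] 0(1) smooth_on_su by blast
  then have "isCont g 0" by (rule differentiable_imp_continuous_within)
  then have "(g \<longlongrightarrow> 0) (at 0)" using g0 by (simp add: isCont_def)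
  then have "((\<lambda>z. norm (g z)) \<longlongrightarrow> 0) (at 0)" using tendsto_norm_zero by blast
  then show ?case by simp
next
  case (Suc m)
  let ?D1 = "iter_deriv g [1]" and ?Di = "iter_deriv g [\<i>]"
  have sD: "smooth_on U ?D1" "smooth_on U ?Di"
    using smooth_deriv[OF Suc.prems(1), of "[1]"] smooth_deriv[OF Suc.prems(1), of "[\<i>]"] by auto
  have fD: "flat (Suc m) ?D1 0" "flat (Suc m) ?Di 0"
    using flat_deriv[OF Suc.prems(2), of 1] flat_deriv[OF Suc.prems(2), of \<i>] by auto
  have lim1: "((\<lambda>z. norm (?D1 z) / norm z ^ m) \<longlongrightarrow> 0) (at 0)" by (rule Suc.IH[OF sD(1) fD(1)])
  have limi: "((\<lambda>z. norm (?Di z) / norm z ^ m) \<longlongrightarrow> 0) (at 0)" by (rule Suc.IH[OF sD(2) fD(2)])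
  have D10: "?D1 0 = 0" and Di0: "?Di 0 = 0" and g0: "g 0 = 0"
    using fD Suc.prems(2) unfolding flat_def by (metis iter_deriv.simps(1) list.size(3) zero_less_Suc)+
  show ?case unfolding LIM_def
  proof (intro allI impI)
    fix e :: real assume e: "e > 0"
    obtain d1 where d1: "d1 > 0" "\<And>y. y \<noteq> 0 \<Longrightarrow> dist y 0 < d1 \<Longrightarrow> dist (norm (?D1 y) / norm y ^ m) 0 < e / 4"
      using lim1 e unfolding LIM_def by (metis zero_less_divide_iff zero_less_numeral)
    obtain di where di: "di > 0" "\<And>y. y \<noteq> 0 \<Longrightarrow> dist y 0 < di \<Longrightarrow> dist (norm (?Di y) / norm y ^ m) 0 < e / 4"
      using limi e unfolding LIM_def by (metis zero_less_divide_iff zero_less_numeral)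
    obtain r where r: "r > 0" "ball 0 r \<subseteq> U" using U z0 open_contains_ball by blast
    define d where "d = min (min d1 di) r"
    have d: "d > 0" using d1 di r unfolding d_def by simp
    have bnd: "norm (?D1 y) \<le> e / 4 * norm y ^ m \<and> norm (?Di y) \<le> e / 4 * norm y ^ m" if y: "norm y < d" for y
    proof (cases "y = 0")
      case True then show ?thesis using D10 Di0 e by (simp add: zero_le_power)
    next
      case False
      then have pos: "norm y ^ m > 0" by simp
      have "norm (?D1 y) / norm y ^ m < e / 4" using d1(2)[OF False] y unfolding d_def by simp
      moreover have "norm (?Di y) / norm y ^ m < e / 4" using di(2)[OF False] y unfolding d_def by simp
      ultimately show ?thesis using pos by (simp add: divide_less_eq less_imp_le)
    qed
    show "\<exists>s>0. \<forall>z. z \<noteq> 0 \<and> dist z 0 < s \<longrightarrow> dist (norm (g z) / norm z ^ Suc m) 0 < e"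
    proof (intro exI[of _ d] conjI allI impI d)
      fix z :: complex assume z: "z \<noteq> 0 \<and> dist z 0 < d"
      have nz: "norm z < d" using z by simp
      let ?S = "cball (0::complex) (norm z)"
      have inU: "y \<in> U" if "y \<in> ?S" for y
        using that nz r unfolding d_def by (auto simp: dist_norm)
      have der: "(g has_derivative (\<lambda>w. iter_deriv g [w] y)) (at y within ?S)" if "y \<in> ?S" for y
        using su_has_derivative[OF U _ _ inU[OF that], of "Suc 0" g "[]"] Suc.prems(1) smooth_on_su
        by (auto intro: has_derivative_at_withinI)
      have onb: "onorm (\<lambda>w. iter_deriv g [w] y) \<le> e / 2 * norm z ^ m" if yS: "y \<in> ?S" for y
      proof (rule onorm_le)
        fix w :: complex
        have ny: "norm y \<le> norm z" using yS by simp
        have b: "norm (?D1 y) \<le> e / 4 * norm z ^ m" "norm (?Di y) \<le> e / 4 * norm z ^ m"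
          using bnd[of y] ny nz e
          by (meson dual_order.trans le_less_trans mult_left_mono norm_ge_zero power_mono zero_le_divide_iff
              less_imp_le zero_le_numeral)+
        have "iter_deriv g [w] y = Re w *\<^sub>R ?D1 y + Im w *\<^sub>R ?Di y"
          using last_slot_complex[OF U Suc.prems(1) inU[OF yS], of "[]" w] by simp
        then have "norm (iter_deriv g [w] y) \<le> \<bar>Re w\<bar> * norm (?D1 y) + \<bar>Im w\<bar> * norm (?Di y)"
          by (metis norm_scaleR norm_triangle_ineq)
        also have "\<dots> \<le> cmod w * (e / 4 * norm z ^ m) + cmod w * (e / 4 * norm z ^ m)"
          using b abs_Re_le_cmod[of w] abs_Im_le_cmod[of w]
          by (intro add_mono mult_mono) auto
        also have "\<dots> = e / 2 * norm z ^ m * norm w" by (simp add: algebra_simps)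
        finally show "norm (iter_deriv g [w] y) \<le> e / 2 * norm z ^ m * norm w" .
      qed
      have "norm (g z - g 0) \<le> e / 2 * norm z ^ m * norm (z - 0)"
        by (rule differentiable_bound[OF convex_cball der onb]) auto
      then have "norm (g z) \<le> e / 2 * norm z ^ Suc m" using g0 by (simp add: algebra_simps)
      then have "norm (g z) / norm z ^ Suc m \<le> e / 2" using z by (simp add: divide_le_eq)
      moreover have "norm (g z) / norm z ^ Suc m \<ge> 0" by simp
      moreover define q where "q = norm (g z) / norm z ^ Suc m"
      ultimately have "q \<le> e / 2" "q \<ge> 0" by simp_all
      then have "dist q 0 < e" using e unfolding dist_real_def by simp
      then show "dist (norm (g z) / norm z ^ Suc m) 0 < e" unfolding q_def .
    qed
  qed
qed

lemma re_im_smult: "Re v *\<^sub>R y + Im v *\<^sub>R (\<i> *s y) = v *s (y :: complex ^ 'n)"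
proof -
  have v: "v = of_real (Re v) + \<i> * of_real (Im v)" by (simp add: complex_eq_iff)
  show ?thesis
    unfolding vec_eq_iff
  proof
    fix i
    have "Re v *\<^sub>R y $ i + Im v *\<^sub>R (\<i> * y $ i) = (of_real (Re v) + \<i> * of_real (Im v)) * y $ i"
      by (simp add: scaleR_conv_of_real algebra_simps)
    also have "\<dots> = v * y $ i" using v by simp
    finally show "(Re v *\<^sub>R y + Im v *\<^sub>R (\<i> *s y)) $ i = (v *s y) $ i" by simp
  qed
qed

lemma tensor_from_slots:
  fixes T :: "complex list \<Rightarrow> complex ^ 'n"
  assumes perm: "\<And>xs ys. mset xs = mset ys \<Longrightarrow> T xs = T ys"
    and slot: "\<And>ws v. length ws = k \<Longrightarrow> T (ws @ [v]) = v *s T (ws @ [1])"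
  shows "length vs \<le> Suc k \<Longrightarrow> T (vs @ replicate (Suc k - length vs) 1) = prod_list vs *s T (replicate (Suc k) 1)"
proof (induction vs)
  case Nil then show ?case by simp
next
  case (Cons v vs)
  let ?r = "replicate (k - length vs) (1::complex)"
  have L: "length vs \<le> k" using Cons.prems by simp
  have "T ((v # vs) @ replicate (Suc k - length (v # vs)) 1) = T (v # vs @ ?r)" by simp
  also have "\<dots> = T ((vs @ ?r) @ [v])" by (rule perm) simp
  also have "\<dots> = v *s T ((vs @ ?r) @ [1])" by (rule slot) (use L in simp)
  also have "T ((vs @ ?r) @ [1]) = T (vs @ replicate (Suc k - length vs) 1)"
  proof (rule perm)
    have "Suc k - length vs = Suc (k - length vs)" using L by simp
    then show "mset ((vs @ ?r) @ [1]) = mset (vs @ replicate (Suc k - length vs) 1)" by simp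
  qed
  also have "\<dots> = prod_list vs *s T (replicate (Suc k) 1)" using Cons.IH L by simp
  finally show ?case by (simp add: vector_smult_assoc)
qed

lemma prod_fact_complex: "(\<Prod>j<n. (of_nat (n - j) :: complex)) = of_nat (fact n)"
proof -
  have "(fact n :: nat) = (\<Prod>i = 0..<n. n - i)" using fact_prod_rev[of n, where 'a = nat] by simp
  then show ?thesis by (simp add: atLeast0LessThan)
qed

theorem mainTheorem1:
  fixes U :: "complex set" and V :: "(complex ^ 'n) set"
    and u :: "complex \<Rightarrow> complex ^ 'n"
    and J :: "complex ^ 'n \<Rightarrow> complex ^ 'n \<Rightarrow> complex ^ 'n"
    and k :: nat
  assumes "open U" and "0 \<in> U" and "open V" and "u ` U \<subseteq> V"
    and "smooth_on U u"
    and "u 0 = 0"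
    and "almost_complex_on V J"
    and "\<forall>m. J 0 (axis m 1) = axis m \<i> \<and> J 0 (axis m \<i>) = - axis m 1"
    and "J_holomorphic_on U J u"
    and "k \<ge> 1"
    and "jet_vanishes k u 0"
  shows "\<exists>a :: complex ^ 'n.
           ((\<lambda>z. norm (u z - (z ^ Suc k) *s a) / norm z ^ Suc k) \<longlongrightarrow> 0) (at 0)
         \<and> (\<forall>vs. length vs = Suc k \<longrightarrow>
               iter_deriv u vs 0 = (of_nat (fact (Suc k)) * prod_list vs) *s a)"
proof -
  have U: "open U" and z0: "0 \<in> U" and V: "open V" and uUV: "u ` U \<subseteq> V"
    and su: "smooth_on U u" and u0: "u 0 = 0" and ac: "almost_complex_on V J"
    and ax: "\<forall>m. J 0 (axis m 1) = axis m \<i> \<and> J 0 (axis m \<i>) = - axis m 1"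
    and hol: "J_holomorphic_on U J u" and k1: "k \<ge> 1" and jet: "jet_vanishes k u 0"
    using assms by auto
  have V0: "0 \<in> V" using uUV z0 u0 by force
  have linJ: "\<And>p. p \<in> V \<Longrightarrow> linear (J p)" using ac unfolding almost_complex_on_def by blast
  have sJ: "\<And>b. smooth_on V (\<lambda>p. J p b)" using ac unfolding almost_complex_on_def by blast
  have J0: "\<And>x. J 0 x = \<i> *s x" using J0_mult[OF linJ[OF V0] ax] .
  let ?D1 = "iter_deriv u [1]" and ?Di = "iter_deriv u [\<i>]"
  have sD1: "smooth_on U ?D1" and sDi: "smooth_on U ?Di" using smooth_deriv[OF su] by blast+
  have key: "iter_deriv u (ws @ [\<i>]) 0 = \<i> *s iter_deriv u (ws @ [1]) 0" if lws: "length ws \<le> k" for ws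
  proof -
    define f where "f = (\<lambda>(b::complex ^ 'n) z. ?D1 z \<bullet> b)"
    define g where "g = (\<lambda>(b::complex ^ 'n) z. J (u z) b + (- J 0 b))"
    define H where "H = (\<lambda>z. \<Sum>b\<in>Basis. f b z *\<^sub>R g b z)"
    have sf: "smooth_on U (f b)" for b
    proof -
      have "su n U (f b)" for n
        unfolding f_def using su_linear[OF U _ bounded_linear_inner_left[of b], of n ?D1] sD1 smooth_on_su by auto
      then show ?thesis by (simp add: smooth_on_su)
    qed
    have sg: "smooth_on U (g b)" for b
    proof -
      have s1: "smooth_on U (\<lambda>z. J (u z) b)" by (rule smooth_compose[OF U V uUV su sJ])
      have "su n U (g b)" for n
      proof -
        have a1: "su n U (\<lambda>z. J (u z) b)" using s1 smooth_on_su by blast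
        show ?thesis unfolding g_def by (rule su_add[OF U a1 su_const])
      qed
      then show ?thesis by (simp add: smooth_on_su)
    qed
    have ff: "flat k (f b) 0" for b
      unfolding flat_def
    proof (intro allI impI)
      fix zs :: "complex list" assume l: "length zs < k"
      have "iter_deriv (f b) zs 0 = iter_deriv ?D1 zs 0 \<bullet> b"
        unfolding f_def using iter_deriv_linear[OF U _ bounded_linear_inner_left[of b], of "length zs" ?D1 zs 0]
          sD1 smooth_on_su z0 by auto
      also have "iter_deriv ?D1 zs 0 = iter_deriv u (zs @ [1]) 0" by (simp only: iter_deriv_append)
      also have "\<dots> = 0" using jet l unfolding jet_vanishes_def by simp
      finally show "iter_deriv (f b) zs 0 = 0" by simp
    qed
    have fg: "flat 1 (g b) 0" for b
      unfolding flat_def g_def using u0 by simp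
    have term0: "iter_deriv (\<lambda>z. f b z *\<^sub>R g b z) ws 0 = 0" for b
      using leibniz_flat[OF U z0, of ws] sf sg ff fg lws by fastforce
    have sterm: "smooth_on U (\<lambda>z. f b z *\<^sub>R g b z)" for b by (rule smooth_scaleR[OF U sf sg])
    have H0: "iter_deriv H ws 0 = 0"
      unfolding H_def
    proof -
      have "\<And>b. su (length ws) U (\<lambda>z. f b z *\<^sub>R g b z)" using sterm smooth_on_su by blast
      then show "iter_deriv (\<lambda>z. \<Sum>b\<in>Basis. f b z *\<^sub>R g b z) ws 0 = 0"
        using iter_deriv_sum[OF U finite_Basis, of "length ws" "\<lambda>b z. f b z *\<^sub>R g b z" ws 0] z0 term0
        by simp
    qed
    have eqH: "?Di z + (- J 0 (?D1 z)) = H z" if z: "z \<in> U" for z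
    proof -
      have uz: "u z \<in> V" using uUV z by auto
      have "?Di z = J (u z) (?D1 z)" using hol z unfolding J_holomorphic_on_def
        by (metis iter_deriv.simps mult_1_right)
      also have "\<dots> = (\<Sum>b\<in>Basis. (?D1 z \<bullet> b) *\<^sub>R J (u z) b)" by (rule linear_expand[OF linJ[OF uz]])
      finally have e1: "?Di z = (\<Sum>b\<in>Basis. (?D1 z \<bullet> b) *\<^sub>R J (u z) b)" .
      have e2: "J 0 (?D1 z) = (\<Sum>b\<in>Basis. (?D1 z \<bullet> b) *\<^sub>R J 0 b)" by (rule linear_expand[OF linJ[OF V0]])
      show ?thesis unfolding H_def f_def g_def e1 e2
        by (simp add: scaleR_diff_right sum_subtractf)
    qed
    have blJ: "bounded_linear (\<lambda>v. - J 0 v)"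
      using bounded_linear_minus[OF linear_conv_bounded_linear[THEN iffD1, OF linJ[OF V0]]] .
    have "iter_deriv (\<lambda>z. ?Di z + (- J 0 (?D1 z))) ws 0 = iter_deriv H ws 0"
      by (rule iter_deriv_cong_open[OF U eqH z0])
    moreover have "iter_deriv (\<lambda>z. ?Di z + (- J 0 (?D1 z))) ws 0 = iter_deriv ?Di ws 0 + (- J 0 (iter_deriv ?D1 ws 0))"
    proof -
      have s1: "su (length ws) U ?Di" "su (length ws) U ?D1" using sDi sD1 smooth_on_su by blast+
      have s2: "su (length ws) U (\<lambda>z. - J 0 (?D1 z))" by (rule su_linear[OF U s1(2) blJ])
      have "iter_deriv (\<lambda>z. ?Di z + (- J 0 (?D1 z))) ws 0 = iter_deriv ?Di ws 0 + iter_deriv (\<lambda>z. - J 0 (?D1 z)) ws 0"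
        by (rule iter_deriv_add[OF U s1(1) s2 _ z0]) simp
      also have "iter_deriv (\<lambda>z. - J 0 (?D1 z)) ws 0 = - J 0 (iter_deriv ?D1 ws 0)"
        by (rule iter_deriv_linear[OF U s1(2) blJ _ z0]) simp
      finally show ?thesis .
    qed
    ultimately have "iter_deriv ?Di ws 0 = J 0 (iter_deriv ?D1 ws 0)" using H0 by (simp add: algebra_simps)
    then show ?thesis using J0 by (simp only: iter_deriv_append)
  qed
  define T where "T = (\<lambda>ws. iter_deriv u ws 0)"
  have perm: "T xs = T ys" if "mset xs = mset ys" for xs ys
    unfolding T_def using perm_inv[OF U su that z0] .
  have slot: "T (ws @ [v]) = v *s T (ws @ [1])" if "length ws = k" for ws v
  proof -
    have "T (ws @ [v]) = Re v *\<^sub>R T (ws @ [1]) + Im v *\<^sub>R T (ws @ [\<i>])"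
      unfolding T_def by (rule last_slot_complex[OF U su z0])
    also have "T (ws @ [\<i>]) = \<i> *s T (ws @ [1])" unfolding T_def using key that by simp
    finally show ?thesis using re_im_smult by simp
  qed
  define T1 where "T1 = T (replicate (Suc k) 1)"
  have tens: "T vs = prod_list vs *s T1" if "length vs = Suc k" for vs
    using tensor_from_slots[of T k vs, OF perm slot] that unfolding T1_def by simp
  define a where "a = inverse (of_nat (fact (Suc k)) :: complex) *s T1"
  have fz: "(of_nat (fact (Suc k)) :: complex) \<noteq> 0" by (metis fact_nonzero of_nat_eq_0_iff)
  have part2: "iter_deriv u vs 0 = (of_nat (fact (Suc k)) * prod_list vs) *s a" if "length vs = Suc k" for vs
  proof -
    have "iter_deriv u vs 0 = prod_list vs *s T1" using tens[OF that] unfolding T_def .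
    also have "\<dots> = (of_nat (fact (Suc k)) * prod_list vs) *s a"
      unfolding a_def using fz by (simp add: vector_smult_assoc field_simps del: of_nat_fact)
    finally show ?thesis .
  qed
  define q where "q = (\<lambda>z::complex. ((-1) * z ^ Suc k) *s a)"
  define g where "g = (\<lambda>z. u z + q z)"
  have sq: "smooth_on U q" unfolding q_def by (rule smooth_poly)
  have sg: "smooth_on U g"
  proof -
    have "su n U g" for n unfolding g_def
      using su_add[OF U, of n u q] su sq smooth_on_su by blast
    then show ?thesis by (simp add: smooth_on_su)
  qed
  have flatg: "flat (Suc (Suc k)) g 0" unfolding flat_def
  proof (intro allI impI)
    fix ws :: "complex list" assume l: "length ws < Suc (Suc k)"
    have "iter_deriv g ws 0 = iter_deriv u ws 0 + iter_deriv q ws 0"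
      unfolding g_def using iter_deriv_add[OF U, of "length ws" u q ws 0] su sq smooth_on_su z0 by blast
    also have "iter_deriv q ws 0 = ((-1) * (\<Prod>j<length ws. of_nat (Suc k - j)) * prod_list ws * 0 ^ (Suc k - length ws)) *s a"
      unfolding q_def by (rule poly_iter_deriv)
    finally have e: "iter_deriv g ws 0 = iter_deriv u ws 0 + ((-1) * (\<Prod>j<length ws. of_nat (Suc k - j)) * prod_list ws * 0 ^ (Suc k - length ws)) *s a" .
    show "iter_deriv g ws 0 = 0"
    proof (cases "length ws = Suc k")
      case True
      have p: "(\<Prod>j<length ws. (of_nat (Suc k - j)::complex)) = of_nat (fact (Suc k))"
        unfolding True by (rule prod_fact_complex)
      have z: "(0::complex) ^ (Suc k - length ws) = 1" using True by simp
      have "iter_deriv g ws 0 = (of_nat (fact (Suc k)) * prod_list ws) *s a + ((-1) * of_nat (fact (Suc k)) * prod_list ws * 1) *s a"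
        by (simp only: e part2[OF True] p z)
      also have "\<dots> = 0" by (simp add: vec_eq_iff algebra_simps del: of_nat_fact)
      finally show ?thesis .
    next
      case False
      then have L: "length ws \<le> k" using l by simp
      have "iter_deriv u ws 0 = 0"
      proof (cases "ws = []")
        case True then show ?thesis using u0 by simp
      next
        case False then show ?thesis using jet L unfolding jet_vanishes_def by (simp add: Suc_le_eq)
      qed
      moreover have "(0::complex) ^ (Suc k - length ws) = 0" using L by simp
      ultimately show ?thesis using e by simp
    qed
  qed
  have lim: "((\<lambda>z. norm (g z) / norm z ^ Suc k) \<longlongrightarrow> 0) (at 0)"
    by (rule flat_little_o[OF U z0 sg flatg])
  have "g z = u z - (z ^ Suc k) *s a" for z unfolding g_def q_def by (simp add: vec_eq_iff)
  then have "((\<lambda>z. norm (u z - (z ^ Suc k) *s a) / norm z ^ Suc k) \<longlongrightarrow> 0) (at 0)" using lim by simp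
  then show ?thesis using part2 by blast
qed


end
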